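(* Let $\mathcal{M}=(l;\mathcal{V})$ and $\mathcal{M}'=(l';\mathcal{V})$ be semi-parametric models over $\Omega$ with $\mathcal{M}\sim\mathcal{M}'$, and for $\gamma>0$ consider the families $\mathcal{M}(\gamma)=(\gamma l;\mathcal{V})$ and $\mathcal{M}'(\gamma)=(\gamma l';\mathcal{V})$. Then for any data $\mathbf{y}$ (observed at measurement locations $\mathcal{X}$) and noise variance $\sigma^2$, the values of the leave-one-out squared-error criterion, the leave-one-out negative log-likelihood criterion and the SURE criterion are the same for $\mathcal{M}(\gamma)$ and $\mathcal{M}'(\gamma)$, for every $\gamma$. Consequently, if $\gamma^\star$ is an optimal value of the criterion for the family $\mathcal{M}(\gamma)$, it is an optimal value for $\mathcal{M}'(\gamma)$, and the selected models $\mathcal{M}(\gamma^\star)$ and $\mathcal{M}'(\gamma^\star)$ are prediction-equivalent.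
   Context: SPM: a pair $(l;\mathcal{V})$, $\mathcal{V}=\{v_1,\ldots,v_m\}$ linearly independent functions on $\Omega$, $l$ symmetric and conditionally positive semi-definite w.r.t. $\mathcal{V}$ (for every finite $\mathcal{X}$ unisolvent for $\mathcal{V}$, i.e. with basis matrix $\mathbf{V}=[v_j(x_i)]$ of full column rank, $\widetilde{\mathbf{L}}=(\mathbf{I}-\mathbf{Q}\mathbf{Q}^\top)\mathbf{L}(\mathbf{I}-\mathbf{Q}\mathbf{Q}^\top)\succeq0$ where $\mathbf{Q}$ is an orthonormal basis of $\mathrm{span}\,\mathbf{V}$ and $\mathbf{L}=[l(x_i,x_j)]$). Predictive mean and variance at $x$ given observations $\mathbf{y}$ at unisolvent $\mathcal{X}$ with noise variance $\sigma^2$: $\mathbb{E}(f(x)\mid\mathbf{y})=(\mathbf{l}_{x,\mathcal{X}}\ \mathbf{v}_x)\mathbf{S}^{-1}\binom{\mathbf{y}}{\mathbf{0}}$, $\mathrm{Var}(f(x)\mid\mathbf{y})=l(x,x)-(\mathbf{l}_{x,\mathcal{X}}\ \mathbf{v}_x)\mathbf{S}^{-1}\binom{\mathbf{l}_{x,\mathcal{X}}^\top}{\mathbf{v}_x^\top}$, $\mathbf{S}=\begin{pmatrix}\mathbf{L}+\sigma^2\mathbf{I}&\mathbf{V}\\ \mathbf{V}^\top&\mathbf{0}\end{pmatrix}$. Smoother matrix: $\mathbf{M}=\mathbf{Q}\mathbf{Q}^\top+\widetilde{\mathbf{L}}(\widetilde{\mathbf{L}}+\sigma^2\mathbf{I})^{-1}$.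 $\mathcal{M}\sim\mathcal{M}'$ means $|\mathcal{V}|=|\mathcal{V}'|$ and equal predictive means and variances for every finite unisolvent $\mathcal{X}$, all $x,\mathbf{y},\sigma^2>0$. Selection criteria (for $n$ observations $y_i$ at $x_i$, with $\mathbf{y}_{-i}$ the data without the $i$-th observation): LOO squared error $C_{\mathrm{loo\text{-}mse}}=\frac1n\sum_i\big(y_i-\mathbb{E}(f(x_i)\mid\mathbf{y}_{-i})\big)^2$; LOO negative log-likelihood $C_{\mathrm{loo\text{-}nll}}=\frac1n\sum_i\big\{\frac12\log(2\pi\,\mathrm{Var}(y_i\mid\mathbf{y}_{-i}))+\frac{(y_i-\mathbb{E}(y_i\mid\mathbf{y}_{-i}))^2}{2\mathrm{Var}(y_i\mid\mathbf{y}_{-i})}\big\}$, where $y_i\mid\mathbf{y}_{-i}$ is Gaussian with mean $\mathbb{E}(f(x_i)\mid\mathbf{y}_{-i})$ and variance $\mathrm{Var}(f(x_i)\mid\mathbf{y}_{-i})+\sigma^2$; SURE $C_{\mathrm{SURE}}=-\sigma^2+\frac1n\sum_i(y_i-(\mathbf{M}\mathbf{y})_i)^2+\frac{2\sigma^2}{n}\mathrm{Tr}\,\mathbf{M}$. *)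

theory Defs
  imports "HOL-Analysis.Analysis" "Jordan_Normal_Form.Gauss_Jordan_Elimination"
begin

text \<open>Omega is modelled by an arbitrary type 'a.  A finite set of measurement
locations X = {x_1,...,x_n} is a list of distinct points; the function basis
V = {v_1,...,v_m} is a list of functions.\<close>

definition minv :: "real mat \<Rightarrow> real mat" where
  "minv A = (case mat_inverse A of Some B \<Rightarrow> B | None \<Rightarrow> 0\<^sub>m (dim_row A) (dim_row A))"

definition mtrace :: "real mat \<Rightarrow> real" where
  "mtrace A = (\<Sum>i<dim_row A. A $$ (i,i))"

definition psd :: "real mat \<Rightarrow> bool" where
  "psd A \<longleftrightarrow> (\<forall>x \<in> carrier_vec (dim_row A). x \<bullet> (A *\<^sub>v x) \<ge> 0)"

definition basis_mat :: "('a \<Rightarrow> real) list \<Rightarrow> 'a list \<Rightarrow> real mat" where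
  "basis_mat vs xs = mat (length xs) (length vs) (\<lambda>(i,j). (vs ! j) (xs ! i))"

definition kern_mat :: "('a \<Rightarrow> 'a \<Rightarrow> real) \<Rightarrow> 'a list \<Rightarrow> real mat" where
  "kern_mat l xs = mat (length xs) (length xs) (\<lambda>(i,j). l (xs ! i) (xs ! j))"

definition unisolvent :: "('a \<Rightarrow> real) list \<Rightarrow> 'a list \<Rightarrow> bool" where
  "unisolvent vs xs \<longleftrightarrow> distinct xs \<and>
     (\<forall>c \<in> carrier_vec (length vs). basis_mat vs xs *\<^sub>v c = 0\<^sub>v (length xs) \<longrightarrow> c = 0\<^sub>v (length vs))"

text \<open>Q Q^T for an orthonormal basis Q of span V equals V (V^T V)^{-1} V^T.\<close>
definition proj_V :: "('a \<Rightarrow> real) list \<Rightarrow> 'a list \<Rightarrow> real mat" where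
  "proj_V vs xs = (let V = basis_mat vs xs in V * minv (V\<^sup>T * V) * V\<^sup>T)"

definition Ltilde :: "('a \<Rightarrow> 'a \<Rightarrow> real) \<Rightarrow> ('a \<Rightarrow> real) list \<Rightarrow> 'a list \<Rightarrow> real mat" where
  "Ltilde l vs xs = (let n = length xs; R = 1\<^sub>m n - proj_V vs xs in R * kern_mat l xs * R)"

definition lin_indep_funs :: "('a \<Rightarrow> real) list \<Rightarrow> bool" where
  "lin_indep_funs vs \<longleftrightarrow>
     (\<forall>c :: nat \<Rightarrow> real. (\<forall>x. (\<Sum>j<length vs. c j * (vs ! j) x) = 0) \<longrightarrow> (\<forall>j<length vs. c j = 0))"

definition cond_psd :: "('a \<Rightarrow> 'a \<Rightarrow> real) \<Rightarrow> ('a \<Rightarrow> real) list \<Rightarrow> bool" where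
  "cond_psd l vs \<longleftrightarrow> (\<forall>xs. unisolvent vs xs \<longrightarrow> psd (Ltilde l vs xs))"

definition spm :: "('a \<Rightarrow> 'a \<Rightarrow> real) \<Rightarrow> ('a \<Rightarrow> real) list \<Rightarrow> bool" where
  "spm l vs \<longleftrightarrow> lin_indep_funs vs \<and> (\<forall>x y. l x y = l y x) \<and> cond_psd l vs"

definition S_mat :: "('a \<Rightarrow> 'a \<Rightarrow> real) \<Rightarrow> ('a \<Rightarrow> real) list \<Rightarrow> 'a list \<Rightarrow> real \<Rightarrow> real mat" where
  "S_mat l vs xs s2 = (let n = length xs; m = length vs; V = basis_mat vs xs in
     four_block_mat (kern_mat l xs + s2 \<cdot>\<^sub>m 1\<^sub>m n) V (V\<^sup>T) (0\<^sub>m m m))"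

definition lv_vec :: "('a \<Rightarrow> 'a \<Rightarrow> real) \<Rightarrow> ('a \<Rightarrow> real) list \<Rightarrow> 'a list \<Rightarrow> 'a \<Rightarrow> real vec" where
  "lv_vec l vs xs x = vec (length xs + length vs)
     (\<lambda>k. if k < length xs then l x (xs ! k) else (vs ! (k - length xs)) x)"

definition pred_mean :: "('a \<Rightarrow> 'a \<Rightarrow> real) \<Rightarrow> ('a \<Rightarrow> real) list \<Rightarrow> 'a list \<Rightarrow> real list \<Rightarrow> real \<Rightarrow> 'a \<Rightarrow> real" where
  "pred_mean l vs xs ys s2 x = lv_vec l vs xs x \<bullet>
     (minv (S_mat l vs xs s2) *\<^sub>v vec (length xs + length vs) (\<lambda>k. if k < length xs then ys ! k else 0))"

definition pred_var :: "('a \<Rightarrow> 'a \<Rightarrow> real) \<Rightarrow> ('a \<Rightarrow> real) list \<Rightarrow> 'a list \<Rightarrow> real \<Rightarrow> 'a \<Rightarrow> real" where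
  "pred_var l vs xs s2 x = l x x - lv_vec l vs xs x \<bullet> (minv (S_mat l vs xs s2) *\<^sub>v lv_vec l vs xs x)"

definition spm_equiv :: "('a \<Rightarrow> 'a \<Rightarrow> real) \<Rightarrow> ('a \<Rightarrow> real) list \<Rightarrow> ('a \<Rightarrow> 'a \<Rightarrow> real) \<Rightarrow> ('a \<Rightarrow> real) list \<Rightarrow> bool" where
  "spm_equiv l vs l' vs' \<longleftrightarrow> length vs = length vs' \<and>
     (\<forall>xs ys s2 x. unisolvent vs xs \<longrightarrow> unisolvent vs' xs \<longrightarrow> length ys = length xs \<longrightarrow> s2 > 0 \<longrightarrow>
        pred_mean l vs xs ys s2 x = pred_mean l' vs' xs ys s2 x \<and>
        pred_var l vs xs s2 x = pred_var l' vs' xs s2 x)"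

definition del_nth :: "nat \<Rightarrow> 'b list \<Rightarrow> 'b list" where
  "del_nth i zs = take i zs @ drop (Suc i) zs"

definition C_loo_mse :: "('a \<Rightarrow> 'a \<Rightarrow> real) \<Rightarrow> ('a \<Rightarrow> real) list \<Rightarrow> 'a list \<Rightarrow> real list \<Rightarrow> real \<Rightarrow> real" where
  "C_loo_mse l vs xs ys s2 = (1 / real (length xs)) *
     (\<Sum>i<length xs. (ys ! i - pred_mean l vs (del_nth i xs) (del_nth i ys) s2 (xs ! i))\<^sup>2)"

definition C_loo_nll :: "('a \<Rightarrow> 'a \<Rightarrow> real) \<Rightarrow> ('a \<Rightarrow> real) list \<Rightarrow> 'a list \<Rightarrow> real list \<Rightarrow> real \<Rightarrow> real" where
  "C_loo_nll l vs xs ys s2 = (1 / real (length xs)) *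
     (\<Sum>i<length xs.
        let mu = pred_mean l vs (del_nth i xs) (del_nth i ys) s2 (xs ! i);
            v = pred_var l vs (del_nth i xs) s2 (xs ! i) + s2
        in (1/2) * ln (2 * pi * v) + (ys ! i - mu)\<^sup>2 / (2 * v))"

definition smoother :: "('a \<Rightarrow> 'a \<Rightarrow> real) \<Rightarrow> ('a \<Rightarrow> real) list \<Rightarrow> 'a list \<Rightarrow> real \<Rightarrow> real mat" where
  "smoother l vs xs s2 = proj_V vs xs +
     Ltilde l vs xs * minv (Ltilde l vs xs + s2 \<cdot>\<^sub>m 1\<^sub>m (length xs))"

definition C_SURE :: "('a \<Rightarrow> 'a \<Rightarrow> real) \<Rightarrow> ('a \<Rightarrow> real) list \<Rightarrow> 'a list \<Rightarrow> real list \<Rightarrow> real \<Rightarrow> real" where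
  "C_SURE l vs xs ys s2 = (let n = length xs; M = smoother l vs xs s2; yv = vec_of_list ys in
     - s2 + (1 / real n) * (\<Sum>i<n. (ys ! i - (M *\<^sub>v yv) $ i)\<^sup>2) + (2 * s2 / real n) * mtrace M)"

definition scale_kernel :: "real \<Rightarrow> ('a \<Rightarrow> 'a \<Rightarrow> real) \<Rightarrow> 'a \<Rightarrow> 'a \<Rightarrow> real" where
  "scale_kernel g l = (\<lambda>x y. g * l x y)"

definition optimal_gamma :: "(real \<Rightarrow> real) \<Rightarrow> real \<Rightarrow> bool" where
  "optimal_gamma C g \<longleftrightarrow> g > 0 \<and> (\<forall>h>0. C g \<le> C h)"

end

theory Submission
  imports Defs "Jordan_Normal_Form.Determinant"
begin


lemma minv_carrier: "A \<in> carrier_mat n n \<Longrightarrow> minv A \<in> carrier_mat n n"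
  unfolding minv_def using mat_inverse(2)[of A n]
  by (auto split: option.splits)

lemma minv_inv:
  assumes A: "A \<in> carrier_mat n n"
    and inj: "\<And>v. v \<in> carrier_vec n \<Longrightarrow> A *\<^sub>v v = 0\<^sub>v n \<Longrightarrow> v = 0\<^sub>v n"
  shows "A * minv A = 1\<^sub>m n \<and> minv A * A = 1\<^sub>m n \<and> minv A \<in> carrier_mat n n"
proof -
  have U: "A \<in> Units (ring_mat TYPE(real) n ())"
    by (rule det_non_zero_imp_unit[OF A]) (use det_0_iff_vec_prod_zero[OF A] inj in blast)
  have "mat_inverse A \<noteq> None" using U mat_inverse(1)[OF A, where b="()"] by auto
  then obtain B where B: "mat_inverse A = Some B" by auto
  then have "minv A = B" unfolding minv_def by simp
  with mat_inverse(2)[OF A B] show ?thesis by simp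
qed

lemma minv_solve:
  assumes A: "A \<in> carrier_mat n n"
    and inj: "\<And>v. v \<in> carrier_vec n \<Longrightarrow> A *\<^sub>v v = 0\<^sub>v n \<Longrightarrow> v = 0\<^sub>v n"
    and z: "z \<in> carrier_vec n" and b: "A *\<^sub>v z = b"
  shows "minv A *\<^sub>v b = z"
proof -
  note I = minv_inv[OF A inj]
  have "minv A *\<^sub>v b = (minv A * A) *\<^sub>v z" using I A z b assoc_mult_mat_vec[of "minv A" n n A n z] by auto
  also have "\<dots> = z" using I z by simp
  finally show ?thesis .
qed

lemma sprod_self_nonneg: "(v :: real vec) \<bullet> v \<ge> 0"
  unfolding scalar_prod_def by (auto intro: sum_nonneg)

lemma sprod_self_zero: assumes "v \<in> carrier_vec n" "(v :: real vec) \<bullet> v = 0" shows "v = 0\<^sub>v n"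
proof -
  have "\<forall>i\<in>{0..<dim_vec v}. v $ i * v $ i = 0"
    using assms(2) unfolding scalar_prod_def
    by (subst sum_nonneg_eq_0_iff[symmetric]) auto
  then show ?thesis using assms(1) by (intro eq_vecI) auto
qed

lemma carrier_mat_iff: "A \<in> carrier_mat a b \<longleftrightarrow> dim_row A = a \<and> dim_col A = b"
  unfolding carrier_mat_def by simp
lemma carrier_vec_iff: "v \<in> carrier_vec a \<longleftrightarrow> dim_vec v = a"
  unfolding carrier_vec_def by simp

lemma basis_mat_carrier: "basis_mat vs xs \<in> carrier_mat (length xs) (length vs)"
  unfolding basis_mat_def by simp
lemma kern_mat_carrier: "kern_mat l xs \<in> carrier_mat (length xs) (length xs)"
  unfolding kern_mat_def by simp
lemma basis_mat_dims[simp]: "dim_row (basis_mat vs xs) = length xs" "dim_col (basis_mat vs xs) = length vs"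
  unfolding basis_mat_def by simp_all
lemma kern_mat_dims[simp]: "dim_row (kern_mat l xs) = length xs" "dim_col (kern_mat l xs) = length xs"
  unfolding kern_mat_def by simp_all

lemma minv_carrier': "minv A \<in> carrier_mat (dim_row A) (dim_row A)"
proof (cases "dim_row A = dim_col A")
  case True
  then have "A \<in> carrier_mat (dim_row A) (dim_row A)" by (intro carrier_matI) auto
  then show ?thesis by (rule minv_carrier)
next
  case False then have "mat_inverse A = None" unfolding mat_inverse_def by (simp add: if_not_P)
  then show ?thesis unfolding minv_def by simp
qed

lemma minv_dims[simp]: "dim_row (minv A) = dim_row A" "dim_col (minv A) = dim_row A"
  using carrier_matD[OF minv_carrier'[of A]] by auto

lemma mult_zero_vec'[simp]: "A \<in> carrier_mat nr nc \<Longrightarrow> A *\<^sub>v 0\<^sub>v nc = 0\<^sub>v nr"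
  by (intro eq_vecI) (auto simp: scalar_prod_def)

lemma smult_mat_vec: "A \<in> carrier_mat nr nc \<Longrightarrow> v \<in> carrier_vec nc \<Longrightarrow> (k \<cdot>\<^sub>m A) *\<^sub>v v = k \<cdot>\<^sub>v (A *\<^sub>v v)"
  by (intro eq_vecI) (auto simp: scalar_prod_def sum_distrib_left mult.assoc)

lemma zero_mat_vec: "v \<in> carrier_vec nc \<Longrightarrow> 0\<^sub>m nr nc *\<^sub>v v = 0\<^sub>v nr"
  by (intro eq_vecI) (auto simp: scalar_prod_def)

lemma zero_append: "0\<^sub>v (a + b) = 0\<^sub>v a @\<^sub>v 0\<^sub>v b"
  by (intro eq_vecI) auto

lemma entry_unit: "(A :: real mat) \<in> carrier_mat n n \<Longrightarrow> i < n \<Longrightarrow> j < n \<Longrightarrow> A $$ (i,j) = (A *\<^sub>v unit_vec n j) $ i"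
  by simp

lemma vec_idx: "(x :: real Matrix.vec) = y \<Longrightarrow> x $ i = y $ i" by simp


locale uni =
  fixes vs :: "('a \<Rightarrow> real) list" and xs :: "'a list"
  assumes uni: "unisolvent vs xs"
begin
abbreviation "n \<equiv> length xs"
abbreviation "m \<equiv> length vs"
abbreviation "V \<equiv> basis_mat vs xs"
abbreviation "G \<equiv> V\<^sup>T * V"
abbreviation "Gi \<equiv> minv G"
abbreviation "P \<equiv> proj_V vs xs"
abbreviation "R \<equiv> 1\<^sub>m n - P"

lemma Vc: "V \<in> carrier_mat n m" by (rule basis_mat_carrier)
lemma Vtc: "V\<^sup>T \<in> carrier_mat m n" by (rule transpose_carrier_mat[THEN iffD2, OF Vc])
lemma Gc: "G \<in> carrier_mat m m" using mult_carrier_mat[OF Vtc Vc] .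
lemma Gic: "Gi \<in> carrier_mat m m" using minv_carrier'[of G] by simp
lemma VGic: "V * Gi \<in> carrier_mat n m" using mult_carrier_mat[OF Vc Gic] .

lemma V_inj: "b \<in> carrier_vec m \<Longrightarrow> V *\<^sub>v b = 0\<^sub>v n \<Longrightarrow> b = 0\<^sub>v m"
  using uni unfolding unisolvent_def Ball_def by meson

lemma VtV_app: "b \<in> carrier_vec m \<Longrightarrow> V\<^sup>T *\<^sub>v (V *\<^sub>v b) = G *\<^sub>v b"
  using assoc_mult_mat_vec[OF Vtc Vc, of b] by simp

lemma G_inj: assumes b: "b \<in> carrier_vec m" and z: "G *\<^sub>v b = 0\<^sub>v m" shows "b = 0\<^sub>v m"
proof -
  have Vb: "V *\<^sub>v b \<in> carrier_vec n" using Vc b by simp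
  have e1: "(V\<^sup>T *\<^sub>v (V *\<^sub>v b)) \<bullet> b = (V *\<^sub>v b) \<bullet> (V *\<^sub>v b)"
    by (rule transpose_vec_mult_scalar[OF Vc b Vb])
  have "(V *\<^sub>v b) \<bullet> (V *\<^sub>v b) = 0" using e1 VtV_app[OF b] z b by simp
  then have "V *\<^sub>v b = 0\<^sub>v n" using sprod_self_zero[OF Vb] by simp
  then show ?thesis using V_inj b by blast
qed

lemma Gi: "G * Gi = 1\<^sub>m m" "Gi * G = 1\<^sub>m m"
proof -
  note X = minv_inv[OF Gc G_inj]
  show "G * Gi = 1\<^sub>m m" using X by blast
  show "Gi * G = 1\<^sub>m m" using X by blast
qed

lemma Pdef: "P = V * Gi * V\<^sup>T" unfolding proj_V_def Let_def by (rule refl)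
lemma Pc: "P \<in> carrier_mat n n" unfolding Pdef using mult_carrier_mat[OF VGic Vtc] .
lemma Rc: "R \<in> carrier_mat n n" using minus_carrier_mat[OF Pc] .

lemma P_app: assumes a: "a \<in> carrier_vec n" shows "P *\<^sub>v a = V *\<^sub>v (Gi *\<^sub>v (V\<^sup>T *\<^sub>v a))"
proof -
  have Vta: "V\<^sup>T *\<^sub>v a \<in> carrier_vec m" using Vtc a by simp
  show ?thesis unfolding Pdef
    using assoc_mult_mat_vec[OF VGic Vtc a] assoc_mult_mat_vec[OF Vc Gic Vta] by simp
qed

lemma GGi_app: assumes u: "u \<in> carrier_vec m" shows "V\<^sup>T *\<^sub>v (V *\<^sub>v (Gi *\<^sub>v u)) = u"
proof -
  have "Gi *\<^sub>v u \<in> carrier_vec m" using Gic u by simp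
  then have "V\<^sup>T *\<^sub>v (V *\<^sub>v (Gi *\<^sub>v u)) = G *\<^sub>v (Gi *\<^sub>v u)" by (rule VtV_app)
  also have "\<dots> = (G * Gi) *\<^sub>v u" using assoc_mult_mat_vec[OF Gc Gic u] by simp
  also have "\<dots> = u" using Gi u by simp
  finally show ?thesis .
qed

lemma GiG_app: assumes u: "u \<in> carrier_vec m" shows "Gi *\<^sub>v (V\<^sup>T *\<^sub>v (V *\<^sub>v u)) = u"
proof -
  have "Gi *\<^sub>v (V\<^sup>T *\<^sub>v (V *\<^sub>v u)) = Gi *\<^sub>v (G *\<^sub>v u)" using VtV_app[OF u] by simp
  also have "\<dots> = (Gi * G) *\<^sub>v u" using assoc_mult_mat_vec[OF Gic Gc u] by simp
  also have "\<dots> = u" using Gi u by simp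
  finally show ?thesis .
qed

lemma R_app: assumes a: "a \<in> carrier_vec n" shows "R *\<^sub>v a = a - P *\<^sub>v a"
  using minus_mult_distrib_mat_vec[OF one_carrier_mat Pc a] a by simp

lemma VtP: assumes a: "a \<in> carrier_vec n" shows "V\<^sup>T *\<^sub>v (P *\<^sub>v a) = V\<^sup>T *\<^sub>v a"
  using P_app[OF a] GGi_app[of "V\<^sup>T *\<^sub>v a"] Vtc a by simp

lemma VtR: assumes a: "a \<in> carrier_vec n" shows "V\<^sup>T *\<^sub>v (R *\<^sub>v a) = 0\<^sub>v m"
proof -
  have Pa: "P *\<^sub>v a \<in> carrier_vec n" using Pc a by simp
  have "V\<^sup>T *\<^sub>v (R *\<^sub>v a) = V\<^sup>T *\<^sub>v a - V\<^sup>T *\<^sub>v (P *\<^sub>v a)"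
    using R_app[OF a] mult_minus_distrib_mat_vec[OF Vtc a Pa] by simp
  then show ?thesis using VtP[OF a] Vtc a by (auto intro!: eq_vecI)
qed

lemma P_zero: assumes a: "a \<in> carrier_vec n" "V\<^sup>T *\<^sub>v a = 0\<^sub>v m" shows "P *\<^sub>v a = 0\<^sub>v n"
proof -
  have "Gi *\<^sub>v 0\<^sub>v m = 0\<^sub>v m" using Gic by simp
  then show ?thesis using P_app[OF a(1)] a Vc by simp
qed

lemma R_id: assumes a: "a \<in> carrier_vec n" "V\<^sup>T *\<^sub>v a = 0\<^sub>v m" shows "R *\<^sub>v a = a"
  using R_app[OF a(1)] P_zero[OF a] a by (auto intro!: eq_vecI)

lemma RV: assumes b: "b \<in> carrier_vec m" shows "R *\<^sub>v (V *\<^sub>v b) = 0\<^sub>v n"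
proof -
  have Vb: "V *\<^sub>v b \<in> carrier_vec n" using Vc b by simp
  have "P *\<^sub>v (V *\<^sub>v b) = V *\<^sub>v b" using P_app[OF Vb] GiG_app[OF b] by simp
  then show ?thesis using R_app[OF Vb] Vb by (auto intro!: eq_vecI)
qed

lemma RR: assumes a: "a \<in> carrier_vec n" shows "R *\<^sub>v (R *\<^sub>v a) = R *\<^sub>v a"
  using R_id[OF _ VtR[OF a]] Rc a by simp

lemma sprod_V: assumes a: "a \<in> carrier_vec n" "V\<^sup>T *\<^sub>v a = 0\<^sub>v m" and b: "b \<in> carrier_vec m"
  shows "a \<bullet> (V *\<^sub>v b) = 0"
proof -
  have "(V\<^sup>T *\<^sub>v a) \<bullet> b = a \<bullet> (V *\<^sub>v b)" by (rule transpose_vec_mult_scalar[OF Vc b a(1)])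
  then show ?thesis using a b by simp
qed

lemma sprod_R: assumes a: "a \<in> carrier_vec n" "V\<^sup>T *\<^sub>v a = 0\<^sub>v m" and w: "w \<in> carrier_vec n"
  shows "a \<bullet> (R *\<^sub>v w) = a \<bullet> w"
proof -
  have Pw: "P *\<^sub>v w \<in> carrier_vec n" using Pc w by simp
  have g: "Gi *\<^sub>v (V\<^sup>T *\<^sub>v w) \<in> carrier_vec m" using Gic Vtc w by simp
  have "a \<bullet> (P *\<^sub>v w) = 0" using sprod_V[OF a g] P_app[OF w] by simp
  moreover have "a \<bullet> (R *\<^sub>v w) = a \<bullet> w - a \<bullet> (P *\<^sub>v w)"
    using R_app[OF w] scalar_prod_minus_distrib[OF a(1) w Pw] by simp
  ultimately show ?thesis by simp
qed

end


lemma kern_scale: "kern_mat (scale_kernel g l) xs = g \<cdot>\<^sub>m kern_mat l xs"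
  by (intro eq_matI) (auto simp: kern_mat_def scale_kernel_def)

lemma psd_smult: assumes A: "(A :: real mat) \<in> carrier_mat k k" and p: "psd A" and g: "g \<ge> 0"
  shows "psd (g \<cdot>\<^sub>m A)"
  unfolding psd_def
proof
  fix x :: "real Matrix.vec" assume x: "x \<in> carrier_vec (dim_row (g \<cdot>\<^sub>m A))"
  then have xc: "x \<in> carrier_vec k" using A by simp
  have "x \<bullet> ((g \<cdot>\<^sub>m A) *\<^sub>v x) = g * (x \<bullet> (A *\<^sub>v x))"
    using smult_mat_vec[OF A xc] A xc by simp
  moreover have "x \<bullet> (A *\<^sub>v x) \<ge> 0" using p xc A unfolding psd_def by simp
  ultimately show "x \<bullet> ((g \<cdot>\<^sub>m A) *\<^sub>v x) \<ge> 0" using g by simp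
qed

context uni begin
lemma Ltilde_scale: "Ltilde (scale_kernel g l) vs xs = g \<cdot>\<^sub>m Ltilde l vs xs"
proof -
  have Lc: "kern_mat l xs \<in> carrier_mat n n" by (rule kern_mat_carrier)
  have RLc: "R * kern_mat l xs \<in> carrier_mat n n" using mult_carrier_mat[OF Rc Lc] .
  show ?thesis unfolding Ltilde_def Let_def kern_scale
    using mult_smult_distrib[OF Rc Lc, of g] mult_smult_assoc_mat[OF RLc Rc, of g] by simp
qed

lemma psd_scale: assumes "psd (Ltilde l vs xs)" "g > 0" shows "psd (Ltilde (scale_kernel g l) vs xs)"
proof -
  have "Ltilde l vs xs \<in> carrier_mat n n"
    unfolding Ltilde_def Let_def using mult_carrier_mat[OF mult_carrier_mat[OF Rc kern_mat_carrier] Rc] .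
  then show ?thesis unfolding Ltilde_scale using psd_smult assms by simp
qed
end

locale uni_psd = uni vs xs for vs :: "('a \<Rightarrow> real) list" and xs +
  fixes l :: "'a \<Rightarrow> 'a \<Rightarrow> real" and s :: real
  assumes psd: "psd (Ltilde l vs xs)" and spos: "s > 0"
begin

abbreviation "L \<equiv> kern_mat l xs"
abbreviation "Lt \<equiv> Ltilde l vs xs"
abbreviation "K \<equiv> Lt + s \<cdot>\<^sub>m 1\<^sub>m n"
abbreviation "Ki \<equiv> minv K"
abbreviation "AA \<equiv> L + s \<cdot>\<^sub>m 1\<^sub>m n"
abbreviation "S \<equiv> S_mat l vs xs s"

lemma Lc: "L \<in> carrier_mat n n" by (rule kern_mat_carrier)
lemma Lt_def: "Lt = R * L * R" unfolding Ltilde_def Let_def by (rule refl)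
lemma RLc: "R * L \<in> carrier_mat n n" using mult_carrier_mat[OF Rc Lc] .
lemma Ltc: "Lt \<in> carrier_mat n n" unfolding Lt_def using mult_carrier_mat[OF RLc Rc] .
lemma Kc: "K \<in> carrier_mat n n" using add_carrier_mat[OF smult_carrier_mat[OF one_carrier_mat]] Ltc by simp
lemma AAc: "AA \<in> carrier_mat n n" using add_carrier_mat[OF smult_carrier_mat[OF one_carrier_mat]] Lc by simp
lemma Kic: "Ki \<in> carrier_mat n n" using minv_carrier[OF Kc] .

lemma Lt_app: assumes w: "w \<in> carrier_vec n" shows "Lt *\<^sub>v w = R *\<^sub>v (L *\<^sub>v (R *\<^sub>v w))"
proof -
  have Rw: "R *\<^sub>v w \<in> carrier_vec n" using Rc w by simp
  show ?thesis unfolding Lt_def using assoc_mult_mat_vec[OF RLc Rc w] assoc_mult_mat_vec[OF Rc Lc Rw] by simp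
qed

lemma psd_Lt: "a \<in> carrier_vec n \<Longrightarrow> a \<bullet> (Lt *\<^sub>v a) \<ge> 0"
  using psd Ltc unfolding psd_def by auto

lemma K_app: assumes w: "w \<in> carrier_vec n" shows "K *\<^sub>v w = Lt *\<^sub>v w + s \<cdot>\<^sub>v w"
proof -
  have "K *\<^sub>v w = Lt *\<^sub>v w + (s \<cdot>\<^sub>m 1\<^sub>m n) *\<^sub>v w"
    using add_mult_distrib_mat_vec[OF Ltc _ w, of "s \<cdot>\<^sub>m 1\<^sub>m n"] by simp
  also have "(s \<cdot>\<^sub>m 1\<^sub>m n) *\<^sub>v w = s \<cdot>\<^sub>v w" using smult_mat_vec[OF one_carrier_mat w] w by simp
  finally show ?thesis .
qed

lemma AA_app: assumes w: "w \<in> carrier_vec n" shows "AA *\<^sub>v w = L *\<^sub>v w + s \<cdot>\<^sub>v w"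
proof -
  have "AA *\<^sub>v w = L *\<^sub>v w + (s \<cdot>\<^sub>m 1\<^sub>m n) *\<^sub>v w"
    using add_mult_distrib_mat_vec[OF Lc _ w, of "s \<cdot>\<^sub>m 1\<^sub>m n"] by simp
  also have "(s \<cdot>\<^sub>m 1\<^sub>m n) *\<^sub>v w = s \<cdot>\<^sub>v w" using smult_mat_vec[OF one_carrier_mat w] w by simp
  finally show ?thesis .
qed

lemma K_inj: assumes a: "a \<in> carrier_vec n" and z: "K *\<^sub>v a = 0\<^sub>v n" shows "a = 0\<^sub>v n"
proof -
  have La: "Lt *\<^sub>v a \<in> carrier_vec n" using Ltc a by simp
  have "a \<bullet> (K *\<^sub>v a) = a \<bullet> (Lt *\<^sub>v a) + s * (a \<bullet> a)"
    using K_app[OF a] scalar_prod_add_distrib[OF a La, of "s \<cdot>\<^sub>v a"] a by simp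
  then have "a \<bullet> (Lt *\<^sub>v a) + s * (a \<bullet> a) = 0" using z a by simp
  moreover have "a \<bullet> (Lt *\<^sub>v a) \<ge> 0" by (rule psd_Lt[OF a])
  moreover have "a \<bullet> a \<ge> 0" by (rule sprod_self_nonneg)
  ultimately have "s * (a \<bullet> a) = 0" using spos
    by (smt (verit) mult_nonneg_nonneg)
  then have "a \<bullet> a = 0" using spos by simp
  then show ?thesis using sprod_self_zero[OF a] by simp
qed

lemma K_inv: "K * Ki = 1\<^sub>m n" "Ki * K = 1\<^sub>m n"
  using minv_inv[OF Kc K_inj] by auto

lemma S_def: "S = four_block_mat AA V V\<^sup>T (0\<^sub>m m m)"
  unfolding S_mat_def Let_def by (rule refl)

lemma Sc: "S \<in> carrier_mat (n+m) (n+m)"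
  unfolding S_def using four_block_carrier_mat[OF AAc zero_carrier_mat[of m m]] by simp

lemma S_block: assumes z1: "z1 \<in> carrier_vec n" and z2: "z2 \<in> carrier_vec m"
  shows "S *\<^sub>v (z1 @\<^sub>v z2) = (AA *\<^sub>v z1 + V *\<^sub>v z2) @\<^sub>v (V\<^sup>T *\<^sub>v z1)"
proof -
  have "S *\<^sub>v (z1 @\<^sub>v z2) = (AA *\<^sub>v z1 + V *\<^sub>v z2) @\<^sub>v (V\<^sup>T *\<^sub>v z1 + 0\<^sub>m m m *\<^sub>v z2)"
    unfolding S_def by (rule four_block_mat_mult_vec[OF AAc Vc Vtc zero_carrier_mat z1 z2])
  also have "V\<^sup>T *\<^sub>v z1 + 0\<^sub>m m m *\<^sub>v z2 = V\<^sup>T *\<^sub>v z1"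
    using zero_mat_vec[OF z2] Vtc z1 by simp
  finally show ?thesis .
qed

lemma S_solve: assumes z: "z \<in> carrier_vec (n+m)" and b1: "b1 \<in> carrier_vec n" and b2: "b2 \<in> carrier_vec m"
  and Sz: "S *\<^sub>v z = b1 @\<^sub>v b2"
  shows "AA *\<^sub>v vec_first z n + V *\<^sub>v vec_last z m = b1" "V\<^sup>T *\<^sub>v vec_first z n = b2"
proof -
  have zz: "z = vec_first z n @\<^sub>v vec_last z m" using z by simp
  have "(AA *\<^sub>v vec_first z n + V *\<^sub>v vec_last z m) @\<^sub>v (V\<^sup>T *\<^sub>v vec_first z n) = b1 @\<^sub>v b2"
    using Sz S_block[of "vec_first z n" "vec_last z m"] zz by simp
  moreover have "AA *\<^sub>v vec_first z n + V *\<^sub>v vec_last z m \<in> carrier_vec n"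
    using add_carrier_vec[OF mult_mat_vec_carrier[OF AAc vec_first_carrier] mult_mat_vec_carrier[OF Vc vec_last_carrier]] .
  ultimately show "AA *\<^sub>v vec_first z n + V *\<^sub>v vec_last z m = b1" "V\<^sup>T *\<^sub>v vec_first z n = b2"
    using append_vec_eq[OF _ b1] by blast+
qed


lemma S_inj: assumes z: "z \<in> carrier_vec (n+m)" and Sz: "S *\<^sub>v z = 0\<^sub>v (n+m)" shows "z = 0\<^sub>v (n+m)"
proof -
  define z1 where "z1 = vec_first z n"
  define z2 where "z2 = vec_last z m"
  have z1c: "z1 \<in> carrier_vec n" and z2c: "z2 \<in> carrier_vec m" unfolding z1_def z2_def by auto
  have e: "AA *\<^sub>v z1 + V *\<^sub>v z2 = 0\<^sub>v n" "V\<^sup>T *\<^sub>v z1 = 0\<^sub>v m"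
    using S_solve[OF z zero_carrier_vec zero_carrier_vec] Sz zero_append[of n m] unfolding z1_def z2_def by auto
  have Lz: "L *\<^sub>v z1 \<in> carrier_vec n" using Lc z1c by simp
  have Vz: "V *\<^sub>v z2 \<in> carrier_vec n" using Vc z2c by simp
  have sz: "s \<cdot>\<^sub>v z1 \<in> carrier_vec n" using z1c by simp
  have "0 = z1 \<bullet> (AA *\<^sub>v z1 + V *\<^sub>v z2)" using e(1) z1c by simp
  also have "\<dots> = z1 \<bullet> (L *\<^sub>v z1) + s * (z1 \<bullet> z1) + z1 \<bullet> (V *\<^sub>v z2)"
    using AA_app[OF z1c] scalar_prod_add_distrib[OF z1c add_carrier_vec[OF Lz sz] Vz]
      scalar_prod_add_distrib[OF z1c Lz sz] z1c by simp
  also have "z1 \<bullet> (V *\<^sub>v z2) = 0" by (rule sprod_V[OF z1c e(2) z2c])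
  also have "z1 \<bullet> (L *\<^sub>v z1) = z1 \<bullet> (Lt *\<^sub>v z1)"
    using Lt_app[OF z1c] R_id[OF z1c e(2)] sprod_R[OF z1c e(2) Lz] by simp
  finally have eq: "z1 \<bullet> (Lt *\<^sub>v z1) + s * (z1 \<bullet> z1) = 0" by simp
  have "z1 \<bullet> (Lt *\<^sub>v z1) \<ge> 0" by (rule psd_Lt[OF z1c])
  moreover have "z1 \<bullet> z1 \<ge> 0" by (rule sprod_self_nonneg)
  ultimately have "s * (z1 \<bullet> z1) = 0" using spos eq by (smt (verit) mult_nonneg_nonneg)
  then have "z1 \<bullet> z1 = 0" using spos by simp
  then have z10: "z1 = 0\<^sub>v n" using sprod_self_zero[OF z1c] by simp
  then have "AA *\<^sub>v z1 = 0\<^sub>v n" using AAc by simp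
  then have "V *\<^sub>v z2 = 0\<^sub>v n" using e(1) Vz by simp
  then have "z2 = 0\<^sub>v m" using V_inj[OF z2c] by simp
  then have "z = 0\<^sub>v n @\<^sub>v 0\<^sub>v m" using z10 z unfolding z1_def z2_def by (metis vec_first_last_append)
  then show ?thesis by (metis zero_append)
qed

lemma S_inv: "S * minv S = 1\<^sub>m (n+m)" "minv S * S = 1\<^sub>m (n+m)" "minv S \<in> carrier_mat (n+m) (n+m)"
  using minv_inv[OF Sc S_inj] by auto

lemma S_sol: assumes b: "b \<in> carrier_vec (n+m)" shows "S *\<^sub>v (minv S *\<^sub>v b) = b" "minv S *\<^sub>v b \<in> carrier_vec (n+m)"
proof -
  show "S *\<^sub>v (minv S *\<^sub>v b) = b" using assoc_mult_mat_vec[OF Sc S_inv(3) b] S_inv(1) b by simp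
  show "minv S *\<^sub>v b \<in> carrier_vec (n+m)" using S_inv(3) b by simp
qed


lemma lv_row: assumes i: "i < n" shows "lv_vec l vs xs (xs ! i) = row L i @\<^sub>v row V i"
  using i by (intro eq_vecI) (auto simp: lv_vec_def kern_mat_def basis_mat_def)

lemma smoother_entry: assumes i: "i < n" and j: "j < n"
  shows "smoother l vs xs s $$ (i,j) =
    pred_mean l vs xs (map (\<lambda>k. if k = j then 1 else 0) [0..<n]) s (xs ! i)"
proof -
  define e :: "real Matrix.vec" where "e = unit_vec n j"
  have ec: "e \<in> carrier_vec n" unfolding e_def by simp
  have bvec: "vec (n + m) (\<lambda>k. if k < n then map (\<lambda>k. if k = j then 1 else 0) [0..<n] ! k else 0)
      = e @\<^sub>v 0\<^sub>v m" unfolding e_def using j by (intro eq_vecI) auto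
  define z where "z = minv S *\<^sub>v (e @\<^sub>v 0\<^sub>v m)"
  have zc: "z \<in> carrier_vec (n+m)" and Sz: "S *\<^sub>v z = e @\<^sub>v 0\<^sub>v m"
    unfolding z_def using S_sol[of "e @\<^sub>v 0\<^sub>v m"] ec by auto
  define z1 where "z1 = vec_first z n"
  define z2 where "z2 = vec_last z m"
  have z1c: "z1 \<in> carrier_vec n" and z2c: "z2 \<in> carrier_vec m" unfolding z1_def z2_def by auto
  have zz: "z = z1 @\<^sub>v z2" unfolding z1_def z2_def using zc by simp
  have eqs: "AA *\<^sub>v z1 + V *\<^sub>v z2 = e" "V\<^sup>T *\<^sub>v z1 = 0\<^sub>v m"
    using S_solve[OF zc ec zero_carrier_vec Sz] unfolding z1_def z2_def by auto
  have Lz: "L *\<^sub>v z1 \<in> carrier_vec n" using Lc z1c by simp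
  have Vz: "V *\<^sub>v z2 \<in> carrier_vec n" using Vc z2c by simp
  have sz: "s \<cdot>\<^sub>v z1 \<in> carrier_vec n" using z1c by simp
  have eq1: "L *\<^sub>v z1 + s \<cdot>\<^sub>v z1 + V *\<^sub>v z2 = e" using eqs(1) AA_app[OF z1c] by simp
  have pm: "pred_mean l vs xs (map (\<lambda>k. if k = j then 1 else 0) [0..<n]) s (xs ! i) = e $ i - s * z1 $ i"
  proof -
    have "pred_mean l vs xs (map (\<lambda>k. if k = j then 1 else 0) [0..<n]) s (xs ! i)
        = (row L i @\<^sub>v row V i) \<bullet> (z1 @\<^sub>v z2)"
      unfolding pred_mean_def bvec lv_row[OF i] z_def[symmetric] zz by simp
    also have "\<dots> = row L i \<bullet> z1 + row V i \<bullet> z2"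
      by (rule scalar_prod_append) (use i z1c z2c Lc Vc in auto)
    also have "\<dots> = (L *\<^sub>v z1) $ i + (V *\<^sub>v z2) $ i" using i Lc Vc by simp
    also have "\<dots> = e $ i - s * z1 $ i"
      using vec_idx[OF eq1, of i] i z1c Lz Vz by simp
    finally show ?thesis .
  qed
  have Re: "R *\<^sub>v e \<in> carrier_vec n" using Rc ec by simp
  have RLz: "R *\<^sub>v (L *\<^sub>v z1) \<in> carrier_vec n" using Rc Lz by simp
  have Kz1: "K *\<^sub>v z1 = R *\<^sub>v (L *\<^sub>v z1) + s \<cdot>\<^sub>v z1"
    using K_app[OF z1c] Lt_app[OF z1c] R_id[OF z1c eqs(2)] by simp
  have "R *\<^sub>v e = R *\<^sub>v (L *\<^sub>v z1) + R *\<^sub>v (s \<cdot>\<^sub>v z1) + R *\<^sub>v (V *\<^sub>v z2)"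
    using eq1[symmetric] mult_add_distrib_mat_vec[OF Rc add_carrier_vec[OF Lz sz] Vz]
      mult_add_distrib_mat_vec[OF Rc Lz sz] by simp
  also have "R *\<^sub>v (s \<cdot>\<^sub>v z1) = s \<cdot>\<^sub>v z1" using mult_mat_vec[OF Rc z1c] R_id[OF z1c eqs(2)] by simp
  also have "R *\<^sub>v (V *\<^sub>v z2) = 0\<^sub>v n" by (rule RV[OF z2c])
  finally have "R *\<^sub>v e = K *\<^sub>v z1" using Kz1 RLz z1c by simp
  then have z1K: "Ki *\<^sub>v (R *\<^sub>v e) = z1" using minv_solve[OF Kc K_inj z1c] by simp
  define u where "u = Ki *\<^sub>v e"
  have uc: "u \<in> carrier_vec n" unfolding u_def using Kic ec by simp
  have Ku: "K *\<^sub>v u = e" unfolding u_def using assoc_mult_mat_vec[OF Kc Kic ec] K_inv(1) ec by simp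
  have Pe: "P *\<^sub>v e \<in> carrier_vec n" using Pc ec by simp
  have RPe: "R *\<^sub>v (P *\<^sub>v e) = 0\<^sub>v n"
    using P_app[OF ec] RV[of "Gi *\<^sub>v (V\<^sup>T *\<^sub>v e)"] Gic Vtc ec by simp
  have LtPe: "Lt *\<^sub>v (P *\<^sub>v e) = 0\<^sub>v n"
    using Lt_app[OF Pe] RPe Lc Rc by simp
  have KPe: "K *\<^sub>v (P *\<^sub>v e) = s \<cdot>\<^sub>v (P *\<^sub>v e)"
    using K_app[OF Pe] LtPe Pe by simp
  define w where "w = u - (1/s) \<cdot>\<^sub>v (P *\<^sub>v e)"
  have wc: "w \<in> carrier_vec n" unfolding w_def using uc Pe by simp
  have "K *\<^sub>v w = K *\<^sub>v u - K *\<^sub>v ((1/s) \<cdot>\<^sub>v (P *\<^sub>v e))"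
    unfolding w_def using mult_minus_distrib_mat_vec[OF Kc uc] Pe by simp
  also have "K *\<^sub>v ((1/s) \<cdot>\<^sub>v (P *\<^sub>v e)) = P *\<^sub>v e"
    using mult_mat_vec[OF Kc Pe] KPe spos by (simp add: smult_smult_assoc)
  finally have "K *\<^sub>v w = R *\<^sub>v e" using Ku R_app[OF ec] by simp
  then have "Ki *\<^sub>v (R *\<^sub>v e) = w" using minv_solve[OF Kc K_inj wc] by simp
  then have z1w: "z1 = w" using z1K by simp
  have Ltu: "Lt *\<^sub>v u + s \<cdot>\<^sub>v u = e" using Ku K_app[OF uc] by simp
  have LtKi: "(Lt * Ki) *\<^sub>v e = Lt *\<^sub>v u" unfolding u_def using assoc_mult_mat_vec[OF Ltc Kic ec] .
  have Mc: "Lt * Ki \<in> carrier_mat n n" using mult_carrier_mat[OF Ltc Kic] .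
  have "smoother l vs xs s *\<^sub>v e = P *\<^sub>v e + Lt *\<^sub>v u"
    unfolding smoother_def using add_mult_distrib_mat_vec[OF Pc Mc ec] LtKi by simp
  moreover have "smoother l vs xs s \<in> carrier_mat n n"
    unfolding smoother_def using add_carrier_mat[OF Mc] Pc by simp
  ultimately have "smoother l vs xs s $$ (i,j) = (P *\<^sub>v e) $ i + (Lt *\<^sub>v u) $ i"
    using entry_unit[of "smoother l vs xs s" n i j] i j Pe Ltc uc unfolding e_def by simp
  also have "(Lt *\<^sub>v u) $ i = e $ i - s * u $ i"
    using vec_idx[OF Ltu, of i] i Ltc uc by simp
  also have "z1 $ i = u $ i - (1/s) * (P *\<^sub>v e) $ i" using z1w i carrier_vecD[OF uc] carrier_vecD[OF Pe] unfolding w_def by simp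
  ultimately show ?thesis using pm spos by (simp add: field_simps)
qed


lemma lv_split: "lv_vec l vs xs x = vec n (\<lambda>k. l x (xs ! k)) @\<^sub>v vec m (\<lambda>j. (vs ! j) x)"
  by (intro eq_vecI) (auto simp: lv_vec_def)

lemma lv_split_scale: "lv_vec (scale_kernel g l) vs xs x = (g \<cdot>\<^sub>v vec n (\<lambda>k. l x (xs ! k))) @\<^sub>v vec m (\<lambda>j. (vs ! j) x)"
  by (intro eq_vecI) (auto simp: lv_vec_def scale_kernel_def)

lemma pred_scale: assumes g: "g > 0"
  shows "pred_mean (scale_kernel g l) vs xs ys (g * s) x = pred_mean l vs xs ys s x"
    "pred_var (scale_kernel g l) vs xs (g * s) x = g * pred_var l vs xs s x"
proof -
  interpret S2: uni_psd vs xs "scale_kernel g l" "g * s"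
    by unfold_locales (use psd_scale[OF psd g] spos g in auto)
  let ?S2 = "S_mat (scale_kernel g l) vs xs (g * s)"
  have AA2: "S2.AA *\<^sub>v w = g \<cdot>\<^sub>v (AA *\<^sub>v w)" if w: "w \<in> carrier_vec n" for w
  proof -
    have "S2.AA *\<^sub>v w = g \<cdot>\<^sub>v (L *\<^sub>v w) + (g * s) \<cdot>\<^sub>v w"
      using S2.AA_app[OF w] kern_scale[of g l] smult_mat_vec[OF Lc w] by simp
    then show ?thesis using AA_app[OF w] Lc w by (intro eq_vecI) (auto simp: algebra_simps)
  qed
  define lx where "lx = vec n (\<lambda>k. l x (xs ! k))"
  define vx where "vx = vec m (\<lambda>j. (vs ! j) x)"
  have lxc: "lx \<in> carrier_vec n" and vxc: "vx \<in> carrier_vec m" unfolding lx_def vx_def by auto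
  define b1 where "b1 = vec n (\<lambda>k. ys ! k)"
  have b1c: "b1 \<in> carrier_vec n" unfolding b1_def by simp
  have bb: "vec (n + m) (\<lambda>k. if k < n then ys ! k else 0) = b1 @\<^sub>v 0\<^sub>v m"
    unfolding b1_def by (intro eq_vecI) auto
  define z where "z = minv S *\<^sub>v (b1 @\<^sub>v 0\<^sub>v m)"
  have zc: "z \<in> carrier_vec (n+m)" and Sz: "S *\<^sub>v z = b1 @\<^sub>v 0\<^sub>v m"
    unfolding z_def using S_sol[of "b1 @\<^sub>v 0\<^sub>v m"] b1c by auto
  define z1 where "z1 = vec_first z n"
  define z2 where "z2 = vec_last z m"
  have z1c: "z1 \<in> carrier_vec n" and z2c: "z2 \<in> carrier_vec m" unfolding z1_def z2_def by auto
  have zz: "z = z1 @\<^sub>v z2" unfolding z1_def z2_def using zc by simp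
  have eqs: "AA *\<^sub>v z1 + V *\<^sub>v z2 = b1" "V\<^sup>T *\<^sub>v z1 = 0\<^sub>v m"
    using S_solve[OF zc b1c zero_carrier_vec Sz] unfolding z1_def z2_def by auto
  define z' where "z' = ((1/g) \<cdot>\<^sub>v z1) @\<^sub>v z2"
  have z'c: "z' \<in> carrier_vec (n+m)" unfolding z'_def using z1c z2c by auto
  have "S2.S *\<^sub>v z' = (S2.AA *\<^sub>v ((1/g) \<cdot>\<^sub>v z1) + V *\<^sub>v z2) @\<^sub>v (V\<^sup>T *\<^sub>v ((1/g) \<cdot>\<^sub>v z1))"
    unfolding z'_def using S2.S_block[of "(1/g) \<cdot>\<^sub>v z1" z2] z1c z2c by simp
  also have "S2.AA *\<^sub>v ((1/g) \<cdot>\<^sub>v z1) = AA *\<^sub>v z1"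
    using AA2[of "(1/g) \<cdot>\<^sub>v z1"] mult_mat_vec[OF AAc z1c] z1c g by (simp add: smult_smult_assoc)
  also have "V\<^sup>T *\<^sub>v ((1/g) \<cdot>\<^sub>v z1) = 0\<^sub>v m" using mult_mat_vec[OF Vtc z1c] eqs(2) by (simp, intro eq_vecI, auto)
  finally have "S2.S *\<^sub>v z' = b1 @\<^sub>v 0\<^sub>v m" using eqs(1) by simp
  then have z'sol: "minv S2.S *\<^sub>v (b1 @\<^sub>v 0\<^sub>v m) = z'" using minv_solve[OF S2.Sc S2.S_inj z'c] by simp
  show "pred_mean (scale_kernel g l) vs xs ys (g * s) x = pred_mean l vs xs ys s x"
  proof -
    have "pred_mean (scale_kernel g l) vs xs ys (g * s) x = ((g \<cdot>\<^sub>v lx) @\<^sub>v vx) \<bullet> z'"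
      unfolding pred_mean_def bb lv_split_scale z'sol lx_def vx_def by simp
    also have "\<dots> = (g \<cdot>\<^sub>v lx) \<bullet> ((1/g) \<cdot>\<^sub>v z1) + vx \<bullet> z2"
      unfolding z'_def by (rule scalar_prod_append) (use lxc vxc z1c z2c in auto)
    also have "\<dots> = lx \<bullet> z1 + vx \<bullet> z2" using lxc z1c g by simp
    also have "\<dots> = (lx @\<^sub>v vx) \<bullet> (z1 @\<^sub>v z2)"
      by (rule scalar_prod_append[symmetric]) (use lxc vxc z1c z2c in auto)
    also have "\<dots> = pred_mean l vs xs ys s x"
      unfolding pred_mean_def bb lv_split z_def[symmetric] zz lx_def vx_def by simp
    finally show ?thesis .
  qed
  define y where "y = minv S *\<^sub>v (lx @\<^sub>v vx)"
  have yc: "y \<in> carrier_vec (n+m)" and Sy: "S *\<^sub>v y = lx @\<^sub>v vx"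
    unfolding y_def using S_sol[of "lx @\<^sub>v vx"] lxc vxc by auto
  define y1 where "y1 = vec_first y n"
  define y2 where "y2 = vec_last y m"
  have y1c: "y1 \<in> carrier_vec n" and y2c: "y2 \<in> carrier_vec m" unfolding y1_def y2_def by auto
  have yy: "y = y1 @\<^sub>v y2" unfolding y1_def y2_def using yc by simp
  have eqy: "AA *\<^sub>v y1 + V *\<^sub>v y2 = lx" "V\<^sup>T *\<^sub>v y1 = vx"
    using S_solve[OF yc lxc vxc Sy] unfolding y1_def y2_def by auto
  define y' where "y' = y1 @\<^sub>v (g \<cdot>\<^sub>v y2)"
  have y'c: "y' \<in> carrier_vec (n+m)" unfolding y'_def using y1c y2c by auto
  have "S2.S *\<^sub>v y' = (S2.AA *\<^sub>v y1 + V *\<^sub>v (g \<cdot>\<^sub>v y2)) @\<^sub>v (V\<^sup>T *\<^sub>v y1)"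
    unfolding y'_def using S2.S_block[of y1 "g \<cdot>\<^sub>v y2"] y1c y2c by simp
  also have "S2.AA *\<^sub>v y1 + V *\<^sub>v (g \<cdot>\<^sub>v y2) = g \<cdot>\<^sub>v lx"
  proof -
    have "S2.AA *\<^sub>v y1 + V *\<^sub>v (g \<cdot>\<^sub>v y2) = g \<cdot>\<^sub>v (AA *\<^sub>v y1) + g \<cdot>\<^sub>v (V *\<^sub>v y2)"
      using AA2[OF y1c] mult_mat_vec[OF Vc y2c] by simp
    also have "\<dots> = g \<cdot>\<^sub>v (AA *\<^sub>v y1 + V *\<^sub>v y2)"
      using AAc Vc y1c y2c by (intro eq_vecI) (auto simp: algebra_simps)
    finally show ?thesis using eqy(1) by simp
  qed
  finally have "S2.S *\<^sub>v y' = (g \<cdot>\<^sub>v lx) @\<^sub>v vx" using eqy(2) by simp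
  then have y'sol: "minv S2.S *\<^sub>v ((g \<cdot>\<^sub>v lx) @\<^sub>v vx) = y'" using minv_solve[OF S2.Sc S2.S_inj y'c] by simp
  show "pred_var (scale_kernel g l) vs xs (g * s) x = g * pred_var l vs xs s x"
  proof -
    have "((g \<cdot>\<^sub>v lx) @\<^sub>v vx) \<bullet> y' = (g \<cdot>\<^sub>v lx) \<bullet> y1 + vx \<bullet> (g \<cdot>\<^sub>v y2)"
      unfolding y'_def by (rule scalar_prod_append) (use lxc vxc y1c y2c in auto)
    also have "\<dots> = g * (lx \<bullet> y1 + vx \<bullet> y2)" using lxc y1c vxc y2c by (simp add: algebra_simps)
    also have "lx \<bullet> y1 + vx \<bullet> y2 = (lx @\<^sub>v vx) \<bullet> (y1 @\<^sub>v y2)"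
      by (rule scalar_prod_append[symmetric]) (use lxc vxc y1c y2c in auto)
    finally have e: "((g \<cdot>\<^sub>v lx) @\<^sub>v vx) \<bullet> y' = g * ((lx @\<^sub>v vx) \<bullet> y)" using yy by simp
    show ?thesis unfolding pred_var_def lv_split_scale lv_split
      using e y'sol unfolding y_def lx_def vx_def by (simp add: scale_kernel_def algebra_simps)
  qed
qed


lemma smoother_c: "smoother l vs xs s \<in> carrier_mat n n"
proof -
  have Mc: "Lt * Ki \<in> carrier_mat n n" using mult_carrier_mat[OF Ltc Kic] .
  show ?thesis unfolding smoother_def using add_carrier_mat[OF Mc] Pc by simp
qed

end


lemma spm_psd: "spm l vs \<Longrightarrow> unisolvent vs xs \<Longrightarrow> psd (Ltilde l vs xs)"
  unfolding spm_def cond_psd_def by blast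

lemma scaled_equiv:
  assumes l: "spm l vs" and l': "spm l' vs" and eq: "spm_equiv l vs l' vs" and g: "g > 0"
  shows "spm_equiv (scale_kernel g l) vs (scale_kernel g l') vs"
  unfolding spm_equiv_def
proof (intro conjI allI impI)
  fix xs :: "'a list" and ys :: "real list" and s2 :: real and x :: 'a
  assume u: "unisolvent vs xs" and u': "unisolvent vs xs" and len: "length ys = length xs" and s2: "s2 > (0::real)"
  have sg: "s2 / g > 0" using s2 g by simp
  interpret A1: uni_psd vs xs l "s2 / g" by unfold_locales (use u spm_psd[OF l u] sg in auto)
  interpret A2: uni_psd vs xs l' "s2 / g" by unfold_locales (use u spm_psd[OF l' u] sg in auto)
  have gs: "g * (s2 / g) = s2" using g by simp
  have e: "pred_mean l vs xs ys (s2/g) x = pred_mean l' vs xs ys (s2/g) x"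
      "pred_var l vs xs (s2/g) x = pred_var l' vs xs (s2/g) x"
    using eq u len sg unfolding spm_equiv_def by blast+
  show "pred_mean (scale_kernel g l) vs xs ys s2 x = pred_mean (scale_kernel g l') vs xs ys s2 x"
    using A1.pred_scale(1)[OF g, of ys x] A2.pred_scale(1)[OF g, of ys x] e gs by simp
  show "pred_var (scale_kernel g l) vs xs s2 x = pred_var (scale_kernel g l') vs xs s2 x"
    using A1.pred_scale(2)[OF g, of x] A2.pred_scale(2)[OF g, of x] e gs by simp
qed simp

lemma smoother_eq:
  assumes u: "unisolvent vs xs" and p: "psd (Ltilde l vs xs)" and p': "psd (Ltilde l' vs xs)"
    and eq: "spm_equiv l vs l' vs" and s: "s > 0"
  shows "smoother l vs xs s = smoother l' vs xs s"
proof -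
  interpret A1: uni_psd vs xs l s by unfold_locales (use u p s in auto)
  interpret A2: uni_psd vs xs l' s by unfold_locales (use u p' s in auto)
  show ?thesis
  proof (rule eq_matI)
    fix i j assume i: "i < dim_row (smoother l' vs xs s)" and j: "j < dim_col (smoother l' vs xs s)"
    then have i': "i < length xs" and j': "j < length xs" using A2.smoother_c by auto
    show "smoother l vs xs s $$ (i, j) = smoother l' vs xs s $$ (i, j)"
      unfolding A1.smoother_entry[OF i' j'] A2.smoother_entry[OF i' j']
      using eq u s unfolding spm_equiv_def by simp
  next
    show "dim_row (smoother l vs xs s) = dim_row (smoother l' vs xs s)"
      using A1.smoother_c A2.smoother_c by auto
    show "dim_col (smoother l vs xs s) = dim_col (smoother l' vs xs s)"
      using A1.smoother_c A2.smoother_c by auto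
  qed
qed

theorem mainTheorem6:
  fixes l l' :: "'a \<Rightarrow> 'a \<Rightarrow> real" and vs :: "('a \<Rightarrow> real) list"
    and xs :: "'a list" and ys :: "real list" and s2 :: real
  assumes "spm l vs" and "spm l' vs" and "spm_equiv l vs l' vs"
    and "unisolvent vs xs" and "length ys = length xs" and "s2 > 0"
  shows
    "(\<forall>g>0. C_SURE (scale_kernel g l) vs xs ys s2 = C_SURE (scale_kernel g l') vs xs ys s2)
   \<and> (\<forall>g. optimal_gamma (\<lambda>h. C_SURE (scale_kernel h l) vs xs ys s2) g \<longrightarrow>
          optimal_gamma (\<lambda>h. C_SURE (scale_kernel h l') vs xs ys s2) g
          \<and> spm_equiv (scale_kernel g l) vs (scale_kernel g l') vs)
   \<and> ((\<forall>i<length xs. unisolvent vs (del_nth i xs)) \<longrightarrow>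
       (\<forall>g>0. C_loo_mse (scale_kernel g l) vs xs ys s2 = C_loo_mse (scale_kernel g l') vs xs ys s2
            \<and> C_loo_nll (scale_kernel g l) vs xs ys s2 = C_loo_nll (scale_kernel g l') vs xs ys s2)
     \<and> (\<forall>g. optimal_gamma (\<lambda>h. C_loo_mse (scale_kernel h l) vs xs ys s2) g \<longrightarrow>
          optimal_gamma (\<lambda>h. C_loo_mse (scale_kernel h l') vs xs ys s2) g
          \<and> spm_equiv (scale_kernel g l) vs (scale_kernel g l') vs)
     \<and> (\<forall>g. optimal_gamma (\<lambda>h. C_loo_nll (scale_kernel h l) vs xs ys s2) g \<longrightarrow>
          optimal_gamma (\<lambda>h. C_loo_nll (scale_kernel h l') vs xs ys s2) g
          \<and> spm_equiv (scale_kernel g l) vs (scale_kernel g l') vs))"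
proof -
  note l = assms(1) and l' = assms(2) and eq = assms(3) and u = assms(4) and len = assms(5) and s2 = assms(6)
  have SE: "spm_equiv (scale_kernel g l) vs (scale_kernel g l') vs" if "g > 0" for g
    using scaled_equiv[OF l l' eq that] .
  have sure: "C_SURE (scale_kernel g l) vs xs ys s2 = C_SURE (scale_kernel g l') vs xs ys s2" if g: "g > 0" for g
  proof -
    interpret U: uni vs xs by unfold_locales (rule u)
    have "smoother (scale_kernel g l) vs xs s2 = smoother (scale_kernel g l') vs xs s2"
      by (rule smoother_eq[OF u U.psd_scale[OF spm_psd[OF l u] g] U.psd_scale[OF spm_psd[OF l' u] g] SE[OF g] s2])
    then show ?thesis unfolding C_SURE_def by simp
  qed
  have loo: "C_loo_mse (scale_kernel g l) vs xs ys s2 = C_loo_mse (scale_kernel g l') vs xs ys s2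
        \<and> C_loo_nll (scale_kernel g l) vs xs ys s2 = C_loo_nll (scale_kernel g l') vs xs ys s2"
    if g: "g > 0" and ud: "\<forall>i<length xs. unisolvent vs (del_nth i xs)" for g
  proof -
    have pe: "pred_mean (scale_kernel g l) vs (del_nth i xs) (del_nth i ys) s2 (xs ! i)
          = pred_mean (scale_kernel g l') vs (del_nth i xs) (del_nth i ys) s2 (xs ! i)"
      "pred_var (scale_kernel g l) vs (del_nth i xs) s2 (xs ! i)
          = pred_var (scale_kernel g l') vs (del_nth i xs) s2 (xs ! i)"
      if i: "i \<in> {..<length xs}" for i
    proof -
      have ui: "unisolvent vs (del_nth i xs)" using ud i by simp
      have li: "length (del_nth i ys) = length (del_nth i xs)" using len by (simp add: del_nth_def)
      show "pred_mean (scale_kernel g l) vs (del_nth i xs) (del_nth i ys) s2 (xs ! i)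
          = pred_mean (scale_kernel g l') vs (del_nth i xs) (del_nth i ys) s2 (xs ! i)"
        using SE[OF g] ui li s2 unfolding spm_equiv_def by blast
      show "pred_var (scale_kernel g l) vs (del_nth i xs) s2 (xs ! i)
          = pred_var (scale_kernel g l') vs (del_nth i xs) s2 (xs ! i)"
        using SE[OF g] ui li s2 unfolding spm_equiv_def by blast
    qed
    show ?thesis unfolding C_loo_mse_def C_loo_nll_def
      by (intro conjI arg_cong[where f="\<lambda>t. (1 / real (length xs)) * t"] sum.cong refl) (simp_all add: pe)
  qed
  show ?thesis
  proof (intro conjI allI impI)
    fix g :: real assume g: "g > 0"
    show "C_SURE (scale_kernel g l) vs xs ys s2 = C_SURE (scale_kernel g l') vs xs ys s2" by (rule sure[OF g])
  next
    fix g assume o: "optimal_gamma (\<lambda>h. C_SURE (scale_kernel h l) vs xs ys s2) g"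
    then show "optimal_gamma (\<lambda>h. C_SURE (scale_kernel h l') vs xs ys s2) g"
      unfolding optimal_gamma_def using sure by auto
    show "spm_equiv (scale_kernel g l) vs (scale_kernel g l') vs"
      using o SE unfolding optimal_gamma_def by blast
  next
    fix g :: real assume ud: "\<forall>i<length xs. unisolvent vs (del_nth i xs)" and g: "g > 0"
    show "C_loo_mse (scale_kernel g l) vs xs ys s2 = C_loo_mse (scale_kernel g l') vs xs ys s2"
      using loo[OF g ud] by blast
    show "C_loo_nll (scale_kernel g l) vs xs ys s2 = C_loo_nll (scale_kernel g l') vs xs ys s2"
      using loo[OF g ud] by blast
  next
    fix g assume ud: "\<forall>i<length xs. unisolvent vs (del_nth i xs)"
      and o: "optimal_gamma (\<lambda>h. C_loo_mse (scale_kernel h l) vs xs ys s2) g"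
    then show "optimal_gamma (\<lambda>h. C_loo_mse (scale_kernel h l') vs xs ys s2) g"
      unfolding optimal_gamma_def using loo[OF _ ud] by auto
    show "spm_equiv (scale_kernel g l) vs (scale_kernel g l') vs"
      using o SE unfolding optimal_gamma_def by blast
  next
    fix g assume ud: "\<forall>i<length xs. unisolvent vs (del_nth i xs)"
      and o: "optimal_gamma (\<lambda>h. C_loo_nll (scale_kernel h l) vs xs ys s2) g"
    then show "optimal_gamma (\<lambda>h. C_loo_nll (scale_kernel h l') vs xs ys s2) g"
      unfolding optimal_gamma_def using loo[OF _ ud] by auto
    show "spm_equiv (scale_kernel g l) vs (scale_kernel g l') vs"
      using o SE unfolding optimal_gamma_def by blast
  qed
qed

end
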